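(* Let $\sigma > -2$ and $p < -1-\sigma$, and set $a = \frac{\sigma+2}{1-p} \in (0,1)$, $c_a = \big(a(1-a)\big)^{1/(p-1)}$, $u_a(x) = c_a x^a$. Then there is no positive solution $u \in C^2(0,+\infty)$ of \[ u''(x) + x^\sigma u(x)^p = 0 \quad \text{for all } x>0 \] satisfying $u(x) < u_a(x)$ for all $x>0$. In particular, for every $\alpha<0$, the local solution $u^\alpha := u_a(1+w)$ cannot be extended to a positive solution on all of $(0,+\infty)$, where $w$ is the local solution near $x=0$ of \[ x(xw')' + (2a-1)x w' + a(1-a)(p-1) w + a(1-a)\big[(1+w)^p - 1 - p w\big] = 0 \] with $\lim_{x\searrow0} w(x)/x^{\mu_+} = \alpha$, and $\mu_+>0$ is the positive root of $\mu^2 + (2a-1)\mu + a(1-a)(p-1) = 0$.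
   Context: Note $c_a^{p-1} = a(1-a)$, and $u_a$ is a positive solution of the equation. For $u = u_a(1+w)$, the equation for $u$ on $(0,T)$ is equivalent to the stated equation for $w$; a unique local solution $w\in C[0,T]\cap C^2(0,T)$ with the prescribed asymptotics $\lim_{x\searrow 0}w(x)/x^{\mu_+}=\alpha$ exists for some $T>0$. *)

theory Defs
  imports "HOL-Analysis.Analysis"
begin

definition is_C2_on :: "real set \<Rightarrow> (real \<Rightarrow> real) \<Rightarrow> (real \<Rightarrow> real) \<Rightarrow> (real \<Rightarrow> real) \<Rightarrow> bool" where
  "is_C2_on S u u' u'' \<longleftrightarrow>
     (\<forall>x\<in>S. (u has_real_derivative u' x) (at x) \<and> (u' has_real_derivative u'' x) (at x))
     \<and> continuous_on S u''"

definition pos_solution_on :: "real \<Rightarrow> real \<Rightarrow> real set \<Rightarrow> (real \<Rightarrow> real) \<Rightarrow> bool" where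
  "pos_solution_on \<sigma> p S u \<longleftrightarrow>
     (\<exists>u' u''. is_C2_on S u u' u'' \<and>
        (\<forall>x\<in>S. u x > 0 \<and> u'' x + x powr \<sigma> * (u x) powr p = 0))"

end

theory Submission
  imports Defs
begin


lemma f_pos:
  fixes c p k v :: real
  assumes "0 < c" "p < 1" "k = c powr (p - 1)" "0 < v" "v < c"
  shows "v powr p - k * v > 0"
proof -
  have "v powr p = v powr (p - 1) * v" using assms powr_add[of v "p - 1" 1] by simp
  moreover have "v powr (p - 1) > k" using assms powr_less_mono2_neg[of "p-1" v c] by simp
  ultimately show ?thesis using assms by simp
qed

lemma backward_blowup:
  fixes V V' :: "real \<Rightarrow> real"
  assumes d: "\<And>t. t \<le> t0 \<Longrightarrow> (V has_real_derivative V' t) (at t)"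
    and b: "\<And>t. t \<le> t0 \<Longrightarrow> V' t \<ge> \<delta>" and "\<delta> > 0"
    and pos: "\<And>t. t \<le> t0 \<Longrightarrow> V t > 0"
  shows False
proof -
  define t where "t = t0 - V t0 / \<delta> - 1"
  have lt: "t < t0" using pos[of t0] \<open>\<delta>>0\<close> unfolding t_def by (simp add: field_simps)
  obtain z where z: "t < z" "z < t0" "V t0 - V t = (t0 - t) * V' z"
    using MVT2[OF lt, of V V'] d lt by force
  have "(t0 - t) * V' z \<ge> (t0 - t) * \<delta>" using b[of z] z lt by (intro mult_left_mono) auto
  moreover have "(t0 - t) * \<delta> = V t0 + \<delta>" unfolding t_def using \<open>\<delta>>0\<close> by (simp add: field_simps)
  ultimately have "V t \<le> - \<delta>" using z by linarith
  with pos[of t] lt \<open>\<delta>>0\<close> show False by linarith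
qed

lemma forward_blowup:
  fixes V V' :: "real \<Rightarrow> real"
  assumes d: "\<And>t. t \<ge> t0 \<Longrightarrow> (V has_real_derivative V' t) (at t)"
    and b: "\<And>t. t \<ge> t0 \<Longrightarrow> V' t \<le> -\<delta>" and "\<delta> > 0"
    and pos: "\<And>t. t \<ge> t0 \<Longrightarrow> V t > 0"
  shows False
proof -
  define t where "t = t0 + V t0 / \<delta> + 1"
  have lt: "t0 < t" using pos[of t0] \<open>\<delta>>0\<close> unfolding t_def by (simp add: field_simps)
  obtain z where z: "t0 < z" "z < t" "V t - V t0 = (t - t0) * V' z"
    using MVT2[OF lt, of V V'] d lt by force
  have "(t - t0) * V' z \<le> (t - t0) * (-\<delta>)" using b[of z] z lt by (intro mult_left_mono) auto
  moreover have "(t - t0) * \<delta> = V t0 + \<delta>" unfolding t_def using \<open>\<delta>>0\<close> by (simp add: field_simps)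
  ultimately have "V t \<le> - \<delta>" using z by linarith
  with pos[of t] lt \<open>\<delta>>0\<close> show False by linarith
qed

lemma deriv_nonpos_mono:
  fixes G G' :: "real \<Rightarrow> real"
  assumes "a \<le> b" and d: "\<And>x. a \<le> x \<Longrightarrow> x \<le> b \<Longrightarrow> (G has_real_derivative G' x) (at x)"
    and n: "\<And>x. a \<le> x \<Longrightarrow> x \<le> b \<Longrightarrow> G' x \<le> 0"
  shows "G b \<le> G a"
  using DERIV_nonpos_imp_nonincreasing[OF assms(1), of G] d n by blast



lemma core_nonneg:
  fixes V V' :: "real \<Rightarrow> real" and b c p k :: real
  assumes dV: "\<And>t. (V has_real_derivative V' t) (at t)"
    and dG: "\<And>t. ((\<lambda>t. exp (b * t) * V' t) has_real_derivative
                 - (exp (b * t) * (V t powr p - k * V t))) (at t)"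
    and pos: "\<And>t. 0 < V t" and bnd: "\<And>t. V t < c"
    and "b \<ge> 0" "0 < c" "p < 1" and kdef: "k = c powr (p - 1)"
  shows False
proof -
  define G where "G t = exp (b * t) * V' t" for t
  have dG': "(G has_real_derivative - (exp (b * t) * (V t powr p - k * V t))) (at t)" for t
    unfolding G_def using dG by simp
  have fpos: "V t powr p - k * V t > 0" for t
    using f_pos[OF \<open>0<c\<close> \<open>p<1\<close> kdef pos[of t] bnd[of t]] .
  have Gmono: "G t \<le> G s" if "s \<le> t" for s t
    by (rule deriv_nonpos_mono[OF that dG']) (use fpos in \<open>simp add: mult_nonneg_nonneg less_imp_le\<close>)
  have V'eq: "V' t = exp (- b * t) * G t" for t
    unfolding G_def by (simp add: exp_minus field_simps)
  have Gnp: "G t0 \<le> 0" for t0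
  proof (rule ccontr)
    assume "\<not> G t0 \<le> 0"
    hence g0: "G t0 > 0" by simp
    show False
    proof (rule backward_blowup[of t0 V V' "exp (- b * t0) * G t0"])
      fix t assume "t \<le> t0"
      have "exp (- b * t0) \<le> exp (- b * t)" using \<open>t \<le> t0\<close> \<open>b \<ge> 0\<close> by (simp add: mult_left_mono)
      hence "exp (- b * t0) * G t0 \<le> exp (- b * t) * G t0" using g0 by (simp add: mult_right_mono)
      also have "\<dots> \<le> exp (- b * t) * G t" using Gmono[OF \<open>t \<le> t0\<close>] by simp
      finally show "exp (- b * t0) * G t0 \<le> V' t" using V'eq by simp
    qed (use dV pos g0 in auto)
  qed
  have V'np: "V' t \<le> 0" for t using V'eq[of t] Gnp[of t] by (simp add: mult_nonneg_nonpos)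
  have Vmono: "V t \<le> V s" if "s \<le> t" for s t
    by (rule deriv_nonpos_mono[OF that dV]) (use V'np in auto)
  have key: "V' t \<le> - m * exp (- b)"
    if m: "m \<ge> 0" "\<And>r. t - 1 \<le> r \<Longrightarrow> r \<le> t \<Longrightarrow> V r powr p - k * V r \<ge> m" for t m
  proof -
    define \<phi> where "\<phi> r = G r + m * exp (b * (t - 1)) * r" for r
    have "\<phi> t \<le> \<phi> (t - 1)"
    proof (rule deriv_nonpos_mono[of "t - 1" t \<phi>
          "\<lambda>r. - (exp (b * r) * (V r powr p - k * V r)) + m * exp (b * (t - 1))"])
      fix r assume r: "t - 1 \<le> r" "r \<le> t"
      show "(\<phi> has_real_derivative - (exp (b * r) * (V r powr p - k * V r)) + m * exp (b * (t - 1))) (at r)"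
        unfolding \<phi>_def by (auto intro!: derivative_eq_intros dG')
      have "exp (b * (t - 1)) \<le> exp (b * r)" using r \<open>b \<ge> 0\<close> by (simp add: mult_left_mono)
      hence "m * exp (b * (t - 1)) \<le> m * exp (b * r)" using m by (simp add: mult_left_mono)
      also have "\<dots> \<le> exp (b * r) * (V r powr p - k * V r)" using m(2)[OF r] by (simp add: mult.commute)
      finally show "- (exp (b * r) * (V r powr p - k * V r)) + m * exp (b * (t - 1)) \<le> 0" by simp
    qed simp
    hence "G t \<le> - m * exp (b * (t - 1))" using Gnp[of "t - 1"] unfolding \<phi>_def by (simp add: algebra_simps)
    hence "exp (- b * t) * G t \<le> exp (- b * t) * (- m * exp (b * (t - 1)))"
      by (intro mult_left_mono) auto
    also have "\<dots> = - m * exp (- b)" by (simp add: exp_add[symmetric] algebra_simps)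
    finally show ?thesis using V'eq by simp
  qed
  define v0 where "v0 = V 0"
  have v0: "0 < v0" "v0 < c" using pos bnd unfolding v0_def by auto
  have Vle: "V r \<le> v0" if "r \<ge> 0" for r using Vmono[OF that] unfolding v0_def .
  show False
  proof (cases "p \<le> 0")
    case True
    define m where "m = v0 powr p - k * v0"
    have m0: "m > 0" unfolding m_def using f_pos[OF \<open>0<c\<close> \<open>p<1\<close> kdef v0] .
    have k0: "k > 0" using kdef \<open>0<c\<close> by simp
    have fm: "V r powr p - k * V r \<ge> m" if "r \<ge> 0" for r
    proof -
      have "V r powr p \<ge> v0 powr p" using powr_mono2'[OF True pos[of r] Vle[OF that]] .
      moreover have "k * V r \<le> k * v0" using Vle[OF that] k0 by simp
      ultimately show ?thesis unfolding m_def by linarith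
    qed
    show False
    proof (rule forward_blowup[of 1 V V' "m * exp (- b)"])
      fix t :: real assume "1 \<le> t"
      show "V' t \<le> - (m * exp (- b))" using key[of m t] fm m0 \<open>1 \<le> t\<close> by simp
    qed (use dV pos m0 in auto)
  next
    case False
    hence p0: "p > 0" by simp
    define \<epsilon> where "\<epsilon> = 1 - k * v0 powr (1 - p)"
    have kc: "k * c powr (1 - p) = 1" unfolding kdef using \<open>0<c\<close> by (simp add: powr_add[symmetric])
    have "v0 powr (1 - p) < c powr (1 - p)" using v0 \<open>p<1\<close> by (simp add: powr_less_mono2)
    moreover have k0: "k > 0" using kdef \<open>0<c\<close> by simp
    ultimately have e0: "\<epsilon> > 0" unfolding \<epsilon>_def using kc
      by (metis diff_gt_0_iff_gt mult_strict_left_mono)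
    have fe: "v powr p - k * v \<ge> \<epsilon> * v powr p" if "0 < v" "v \<le> v0" for v
    proof -
      have vv: "v = v powr p * v powr (1 - p)" using that by (simp add: powr_add[symmetric])
      have "v powr (1 - p) \<le> v0 powr (1 - p)" using that \<open>p<1\<close> by (simp add: powr_mono2)
      hence "k * v powr (1 - p) \<le> k * v0 powr (1 - p)" using k0 by simp
      hence "\<epsilon> * v powr p \<le> (1 - k * v powr (1 - p)) * v powr p" unfolding \<epsilon>_def
        by (intro mult_right_mono) auto
      also have "\<dots> = v powr p - k * v" by (subst (3) vv) (simp add: algebra_simps)
      finally show ?thesis .
    qed
    define Y where "Y t = V t powr (1 - p)" for t
    define C where "C = (1 - p) * (\<epsilon> * exp (- b))"
    have C0: "C > 0" unfolding C_def using e0 \<open>p<1\<close> by simp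
    show False
    proof (rule forward_blowup[of 1 Y "\<lambda>t. (1 - p) * V t powr (1 - p - 1) * V' t" C])
      fix t :: real assume "1 \<le> t"
      show "(Y has_real_derivative (1 - p) * V t powr (1 - p - 1) * V' t) (at t)"
        unfolding Y_def using DERIV_fun_powr[OF dV[of t] pos[of t], of "1 - p"] by simp
      have "V' t \<le> - (\<epsilon> * V t powr p) * exp (- b)"
      proof (rule key)
        show "0 \<le> \<epsilon> * V t powr p" using e0 by simp
        fix r assume r: "t - 1 \<le> r" "r \<le> t"
        have "\<epsilon> * V t powr p \<le> \<epsilon> * V r powr p"
          using Vmono[OF r(2)] pos[of t] e0 p0 by (intro mult_left_mono powr_mono2) auto
        also have "\<dots> \<le> V r powr p - k * V r" using fe[OF pos[of r] Vle] r \<open>1 \<le> t\<close> by simp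
        finally show "\<epsilon> * V t powr p \<le> V r powr p - k * V r" .
      qed
      hence "(1 - p) * V t powr (1 - p - 1) * V' t \<le>
             (1 - p) * V t powr (1 - p - 1) * (- (\<epsilon> * V t powr p) * exp (- b))"
        using \<open>p<1\<close> by (intro mult_left_mono) auto
      also have "\<dots> = - C * (V t powr (- p) * V t powr p)" unfolding C_def by (simp add: algebra_simps)
      also have "\<dots> = - C" using pos[of t] by (simp add: powr_add[symmetric])
      finally show "(1 - p) * V t powr (1 - p - 1) * V' t \<le> - C" .
    qed (use pos C0 in \<open>auto simp: Y_def dest: less_imp_neq[symmetric]\<close>)
  qed
qed



lemma core_all:
  fixes V V' :: "real \<Rightarrow> real" and b c p k :: real
  assumes dV: "\<And>t. (V has_real_derivative V' t) (at t)"
    and dG: "\<And>t. ((\<lambda>t. exp (b * t) * V' t) has_real_derivative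
                 - (exp (b * t) * (V t powr p - k * V t))) (at t)"
    and pos: "\<And>t. 0 < V t" and bnd: "\<And>t. V t < c"
    and "0 < c" "p < 1" and kdef: "k = c powr (p - 1)"
  shows False
proof (cases "b \<ge> 0")
  case True
  then show ?thesis using core_nonneg[OF dV dG pos bnd _ \<open>0<c\<close> \<open>p<1\<close> kdef] by blast
next
  case False
  define W where "W t = V (- t)" for t
  define W' where "W' t = - V' (- t)" for t
  show False
  proof (rule core_nonneg[of W W' "- b" p k c])
    fix t
    show "(W has_real_derivative W' t) (at t)"
    proof -
      have "((\<lambda>x. V (- x)) has_real_derivative V' (- t) * (- 1)) (at t)"
        by (rule DERIV_chain2[where f=V and g=uminus and x=t, OF dV[of "- t"]])
          (auto intro!: derivative_eq_intros)
      thus ?thesis by (simp add: W_def[abs_def] W'_def)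
    qed
    have e: "(\<lambda>t. exp (- b * t) * W' t) = (\<lambda>t. - (exp (b * (- t)) * V' (- t)))"
      unfolding W'_def by auto
    have "((\<lambda>x. exp (b * (- x)) * V' (- x)) has_real_derivative
            (- (exp (b * (- t)) * (V (- t) powr p - k * V (- t)))) * (- 1)) (at t)"
      by (rule DERIV_chain2[where f="\<lambda>t. exp (b * t) * V' t" and g=uminus and x=t, OF dG[of "- t"]])
        (auto intro!: derivative_eq_intros)
    hence "((\<lambda>t. - (exp (b * (- t)) * V' (- t))) has_real_derivative
            - (- (exp (b * (- t)) * (V (- t) powr p - k * V (- t))) * (- 1))) (at t)"
      by (rule DERIV_minus)
    then show "((\<lambda>t. exp (- b * t) * W' t) has_real_derivative
                 - (exp (- b * t) * (W t powr p - k * W t))) (at t)"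
      unfolding e W_def by simp
  qed (use pos bnd False \<open>0<c\<close> \<open>p<1\<close> kdef in \<open>auto simp: W_def\<close>)
qed

lemma stays_below:
  fixes V V' :: "real \<Rightarrow> real" and b c p k t1 :: real
  assumes dV: "\<And>t. (V has_real_derivative V' t) (at t)"
    and dG: "\<And>t. ((\<lambda>t. exp (b * t) * V' t) has_real_derivative
                 - (exp (b * t) * (V t powr p - k * V t))) (at t)"
    and pos: "\<And>t. 0 < V t" and bnd: "\<And>t. t < t1 \<Longrightarrow> V t < c"
    and lim: "(V \<longlongrightarrow> c) at_bot"
    and "0 < c" "p < 1" and kdef: "k = c powr (p - 1)"
  shows "V s < c"
proof (rule ccontr)
  assume "\<not> V s < c"
  define S where "S = {t. c \<le> V t}"
  have contV: "continuous_on UNIV V" using dV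
    by (meson DERIV_continuous continuous_at_imp_continuous_on)
  have cS: "closed S" unfolding S_def
    using closed_Collect_le[OF continuous_on_const contV] by simp
  have sS: "s \<in> S" using \<open>\<not> V s < c\<close> unfolding S_def by simp
  have lbS: "t1 \<le> t" if "t \<in> S" for t using that bnd[of t] unfolding S_def by fastforce
  define ts where "ts = Inf S"
  have tsS: "ts \<in> S" unfolding ts_def
    by (rule closed_contains_Inf) (use sS lbS cS in \<open>auto simp: bdd_below_def\<close>)
  have Vts: "c \<le> V ts" using tsS unfolding S_def by simp
  have below: "V t < c" if "t < ts" for t
  proof (rule ccontr)
    assume "\<not> V t < c"
    hence "t \<in> S" unfolding S_def by simp
    hence "ts \<le> t" unfolding ts_def by (rule cInf_lower) (use lbS in \<open>auto simp: bdd_below_def\<close>)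
    with that show False by simp
  qed
  define G where "G t = exp (b * t) * V' t" for t
  have dG': "(G has_real_derivative - (exp (b * t) * (V t powr p - k * V t))) (at t)" for t
    unfolding G_def using dG by simp
  have fpos: "V t powr p - k * V t > 0" if "t < ts" for t
    using f_pos[OF \<open>0<c\<close> \<open>p<1\<close> kdef pos[of t] below[OF that]] .
  have Gmono: "G t \<le> G s" if "s \<le> t" "t < ts" for s t
    by (rule deriv_nonpos_mono[OF that(1) dG']) (use fpos that in \<open>simp add: mult_nonneg_nonneg less_imp_le\<close>)
  have V'eq: "V' t = exp (- b * t) * G t" for t
    unfolding G_def by (simp add: exp_minus field_simps)
  show False
  proof (cases "b \<ge> 0")
    case True
    have Gnp: "G t0 \<le> 0" if "t0 < ts" for t0
    proof (rule ccontr)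
      assume "\<not> G t0 \<le> 0"
      hence g0: "G t0 > 0" by simp
      show False
      proof (rule backward_blowup[of t0 V V' "exp (- b * t0) * G t0"])
        fix t assume "t \<le> t0"
        have "exp (- b * t0) \<le> exp (- b * t)" using \<open>t \<le> t0\<close> \<open>b \<ge> 0\<close> by (simp add: mult_left_mono)
        hence "exp (- b * t0) * G t0 \<le> exp (- b * t) * G t0" using g0 by (simp add: mult_right_mono)
        also have "\<dots> \<le> exp (- b * t) * G t" using Gmono[OF \<open>t \<le> t0\<close> that] by simp
        finally show "exp (- b * t0) * G t0 \<le> V' t" using V'eq by simp
      qed (use dV pos g0 in auto)
    qed
    have lt: "ts - 1 < ts" by simp
    obtain z where z: "ts - 1 < z" "z < ts" "V ts - V (ts - 1) = (ts - (ts - 1)) * V' z"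
      using MVT2[OF lt, of V V'] dV by blast
    have "V' z \<le> 0" using V'eq[of z] Gnp[OF z(2)] by (simp add: mult_nonneg_nonpos)
    hence "V ts \<le> V (ts - 1)" using z by simp
    with below[OF lt] Vts show False by simp
  next
    case False
    have Gnn: "G t0 \<ge> 0" if t0ts: "t0 < ts" for t0
    proof (rule ccontr)
      assume "\<not> G t0 \<ge> 0"
      hence g0: "G t0 < 0" by simp
      obtain z where z: "t0 < z" "z < ts" "V ts - V t0 = (ts - t0) * V' z"
        using MVT2[OF t0ts, of V V'] dV by blast
      have "G z < 0" using Gmono[of t0 z] z g0 by simp
      hence "V' z < 0" using V'eq[of z] by (simp add: mult_pos_neg)
      hence "(ts - t0) * V' z < 0" using z by (intro mult_pos_neg) auto
      hence "V ts < V t0" using z by simp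
      with below[OF t0ts] Vts show False by simp
    qed
    have Vmono: "V t \<le> V s" if "t \<le> s" "s < ts" for s t
    proof -
      have "- V s \<le> - V t"
      proof (rule deriv_nonpos_mono[of t s "\<lambda>x. - V x" "\<lambda>x. - V' x"])
        fix x assume "t \<le> x" "x \<le> s"
        show "((\<lambda>x. - V x) has_real_derivative - V' x) (at x)" using dV by (auto intro!: derivative_eq_intros)
        show "- V' x \<le> 0" using V'eq[of x] Gnn[of x] \<open>x \<le> s\<close> \<open>s < ts\<close> by simp
      qed (use that in auto)
      thus ?thesis by simp
    qed
    have "c \<le> V (ts - 1)"
    proof (rule tendsto_upperbound[OF lim])
      show "\<forall>\<^sub>F x in at_bot. V x \<le> V (ts - 1)"
        unfolding eventually_at_bot_linorder by (rule exI[of _ "ts - 1"]) (auto intro: Vmono)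
    qed simp
    with below[of "ts - 1"] show False by simp
  qed
qed



lemma transform:
  fixes u u' u'' :: "real \<Rightarrow> real" and \<sigma> p a k :: real
  assumes d1: "\<And>x. x > 0 \<Longrightarrow> (u has_real_derivative u' x) (at x)"
    and d2: "\<And>x. x > 0 \<Longrightarrow> (u' has_real_derivative u'' x) (at x)"
    and eq: "\<And>x. x > 0 \<Longrightarrow> u'' x + x powr \<sigma> * u x powr p = 0"
    and pos: "\<And>x. x > 0 \<Longrightarrow> u x > 0"
    and ha: "a * (1 - p) = \<sigma> + 2" and kdef: "k = a * (1 - a)"
  shows "((\<lambda>t. exp (- a * t) * u (exp t)) has_real_derivative
            exp (- a * t) * (exp t * u' (exp t) - a * u (exp t))) (at t)"
    and "((\<lambda>t. exp ((2 * a - 1) * t) * (exp (- a * t) * (exp t * u' (exp t) - a * u (exp t))))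
          has_real_derivative
          - (exp ((2 * a - 1) * t) * ((exp (- a * t) * u (exp t)) powr p - k * (exp (- a * t) * u (exp t))))) (at t)"
proof -
  define E where "E = exp t"
  have E0: "E > 0" unfolding E_def by simp
  have du: "((\<lambda>t. u (exp t)) has_real_derivative u' (exp t) * exp t) (at t)"
    by (rule DERIV_chain2[where f=u, OF d1]) (auto intro!: derivative_eq_intros)
  have du': "((\<lambda>t. u' (exp t)) has_real_derivative u'' (exp t) * exp t) (at t)"
    by (rule DERIV_chain2[where f=u', OF d2]) (auto intro!: derivative_eq_intros)
  show "((\<lambda>t. exp (- a * t) * u (exp t)) has_real_derivative
            exp (- a * t) * (exp t * u' (exp t) - a * u (exp t))) (at t)"
    using du by (auto intro!: derivative_eq_intros simp: algebra_simps)
  have fe: "(\<lambda>t. exp ((2 * a - 1) * t) * (exp (- a * t) * (exp t * u' (exp t) - a * u (exp t))))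
      = (\<lambda>t. exp ((a - 1) * t) * (exp t * u' (exp t) - a * u (exp t)))"
    by (rule ext) (simp add: mult.assoc[symmetric] exp_add[symmetric] left_diff_distrib)
  have D: "((\<lambda>t. exp ((a - 1) * t) * (exp t * u' (exp t) - a * u (exp t))) has_real_derivative
      (a - 1) * exp ((a - 1) * t) * (E * u' E - a * u E)
      + exp ((a - 1) * t) * (E * u' E + E * (u'' E * E) - a * (u' E * E))) (at t)"
    unfolding E_def using du du' by (auto intro!: derivative_eq_intros simp: algebra_simps)
  have "(a - 1) * exp ((a - 1) * t) * (E * u' E - a * u E)
      + exp ((a - 1) * t) * (E * u' E + E * (u'' E * E) - a * (u' E * E))
      = exp ((a - 1) * t) * (E * E * u'' E) + k * (exp ((a - 1) * t) * u E)"
    unfolding kdef by (simp add: algebra_simps)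
  also have "E * E * u'' E = - (exp ((2 + \<sigma>) * t) * u E powr p)"
  proof -
    have "u'' E = - (E powr \<sigma> * u E powr p)" using eq[OF E0] by simp
    moreover have "E * E * E powr \<sigma> = exp ((2 + \<sigma>) * t)"
      unfolding E_def by (simp add: exp_powr_real exp_add[symmetric] algebra_simps)
    ultimately show ?thesis by (simp add: algebra_simps)
  qed
  also have "exp ((a - 1) * t) * - (exp ((2 + \<sigma>) * t) * u E powr p) + k * (exp ((a - 1) * t) * u E)
      = - (exp ((2 * a - 1) * t) * ((exp (- a * t) * u E) powr p - k * (exp (- a * t) * u E)))"
  proof -
    have "(exp (- a * t) * u E) powr p = exp (- a * t * p) * u E powr p"
      using pos[OF E0] by (simp add: powr_mult exp_powr_real)
    moreover have "exp ((a - 1) * t) * exp ((2 + \<sigma>) * t) = exp ((2 * a - 1) * t) * exp (- a * t * p)"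
    proof -
      have "(a - 1) * t + (2 + \<sigma>) * t = (2 * a - 1) * t + - a * t * p" using ha by algebra
      thus ?thesis by (simp add: exp_add[symmetric])
    qed
    moreover have "exp ((2 * a - 1) * t) * exp (- a * t) = exp ((a - 1) * t)"
      by (simp add: exp_add[symmetric] algebra_simps)
    ultimately show ?thesis by (simp add: algebra_simps)
  qed
  finally show "((\<lambda>t. exp ((2 * a - 1) * t) * (exp (- a * t) * (exp t * u' (exp t) - a * u (exp t))))
          has_real_derivative
          - (exp ((2 * a - 1) * t) * ((exp (- a * t) * u (exp t)) powr p - k * (exp (- a * t) * u (exp t))))) (at t)"
    using D unfolding fe E_def by simp
qed



lemma part1:
  fixes \<sigma> p a c :: real and u :: "real \<Rightarrow> real"
  assumes h\<sigma>: "\<sigma> > -2" and hp: "p < -1 - \<sigma>"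
    and ha: "a = (\<sigma> + 2) / (1 - p)"
    and hc: "c = (a * (1 - a)) powr (1 / (p - 1))"
    and sol: "pos_solution_on \<sigma> p {0<..} u"
    and bnd: "\<And>x. x > 0 \<Longrightarrow> u x < c * x powr a"
  shows False
proof -
  obtain u' u'' where C2: "is_C2_on {0<..} u u' u''"
    and eqs: "\<forall>x\<in>{0<..}. u x > 0 \<and> u'' x + x powr \<sigma> * (u x) powr p = 0"
    using sol unfolding pos_solution_on_def by blast
  have d1: "\<And>x. x > 0 \<Longrightarrow> (u has_real_derivative u' x) (at x)"
    and d2: "\<And>x. x > 0 \<Longrightarrow> (u' has_real_derivative u'' x) (at x)"
    using C2 unfolding is_C2_on_def by auto
  have eq: "\<And>x. x > 0 \<Longrightarrow> u'' x + x powr \<sigma> * u x powr p = 0"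
    and pos: "\<And>x. x > 0 \<Longrightarrow> u x > 0" using eqs by auto
  have p1: "1 - p > 0" "p < 1" using hp h\<sigma> by auto
  have a0: "a > 0" unfolding ha using h\<sigma> p1 by simp
  have a1: "a < 1" unfolding ha using hp p1 by (simp add: divide_less_eq)
  have haa: "a * (1 - p) = \<sigma> + 2" unfolding ha using p1 by simp
  define k where "k = a * (1 - a)"
  have k0: "k > 0" unfolding k_def using a0 a1 by simp
  have c0: "c > 0" unfolding hc k_def[symmetric] using k0 by simp
  have kc: "k = c powr (p - 1)" unfolding hc k_def[symmetric] using k0 p1 by (simp add: powr_powr)
  define V where "V t = exp (- a * t) * u (exp t)" for t
  define V' where "V' t = exp (- a * t) * (exp t * u' (exp t) - a * u (exp t))" for t
  note T = transform[OF d1 d2 eq pos haa k_def]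
  show False
  proof (rule core_all[of V V' "2 * a - 1" p k c])
    fix t
    show "(V has_real_derivative V' t) (at t)" unfolding V_def[abs_def] V'_def using T(1) .
    show "((\<lambda>t. exp ((2 * a - 1) * t) * V' t) has_real_derivative
                 - (exp ((2 * a - 1) * t) * (V t powr p - k * V t))) (at t)"
      unfolding V_def V'_def using T(2) .
    show "0 < V t" unfolding V_def using pos by simp
    have "u (exp t) < c * exp t powr a" using bnd by simp
    hence "exp (- a * t) * u (exp t) < exp (- a * t) * (c * exp t powr a)" by simp
    also have "\<dots> = c" by (simp add: exp_powr_real exp_add[symmetric])
    finally show "V t < c" unfolding V_def .
  qed (use c0 p1 kc in auto)
qed

lemma part2:
  fixes \<sigma> p a c \<alpha> \<mu> T :: real and u w :: "real \<Rightarrow> real"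
  assumes h\<sigma>: "\<sigma> > -2" and hp: "p < -1 - \<sigma>"
    and ha: "a = (\<sigma> + 2) / (1 - p)"
    and hc: "c = (a * (1 - a)) powr (1 / (p - 1))"
    and "\<alpha> < 0" "\<mu> > 0" "T > 0"
    and wl: "((\<lambda>x. w x / x powr \<mu>) \<longlongrightarrow> \<alpha>) (at_right 0)"
    and sol: "pos_solution_on \<sigma> p {0<..} u"
    and ueq: "\<forall>x\<in>{0<..<T}. u x = c * x powr a * (1 + w x)"
  shows False
proof -
  obtain u' u'' where C2: "is_C2_on {0<..} u u' u''"
    and eqs: "\<forall>x\<in>{0<..}. u x > 0 \<and> u'' x + x powr \<sigma> * (u x) powr p = 0"
    using sol unfolding pos_solution_on_def by blast
  have d1: "\<And>x. x > 0 \<Longrightarrow> (u has_real_derivative u' x) (at x)"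
    and d2: "\<And>x. x > 0 \<Longrightarrow> (u' has_real_derivative u'' x) (at x)"
    using C2 unfolding is_C2_on_def by auto
  have eq: "\<And>x. x > 0 \<Longrightarrow> u'' x + x powr \<sigma> * u x powr p = 0"
    and pos: "\<And>x. x > 0 \<Longrightarrow> u x > 0" using eqs by auto
  have p1: "1 - p > 0" "p < 1" using hp h\<sigma> by auto
  have a0: "a > 0" unfolding ha using h\<sigma> p1 by simp
  have a1: "a < 1" unfolding ha using hp p1 by (simp add: divide_less_eq)
  have haa: "a * (1 - p) = \<sigma> + 2" unfolding ha using p1 by simp
  define k where "k = a * (1 - a)"
  have k0: "k > 0" unfolding k_def using a0 a1 by simp
  have c0: "c > 0" unfolding hc k_def[symmetric] using k0 by simp
  have kc: "k = c powr (p - 1)" unfolding hc k_def[symmetric] using k0 p1 by (simp add: powr_powr)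
  define V where "V t = exp (- a * t) * u (exp t)" for t
  define V' where "V' t = exp (- a * t) * (exp t * u' (exp t) - a * u (exp t))" for t
  note T = transform[OF d1 d2 eq pos haa k_def]
  have dV: "(V has_real_derivative V' t) (at t)" for t
    unfolding V_def[abs_def] V'_def using T(1) .
  have dG: "((\<lambda>t. exp ((2 * a - 1) * t) * V' t) has_real_derivative
                 - (exp ((2 * a - 1) * t) * (V t powr p - k * V t))) (at t)" for t
    unfolding V_def V'_def using T(2) .
  have Vpos: "0 < V t" for t unfolding V_def using pos by simp
  have Vw: "V t = c * (1 + w (exp t))" if "t < ln T" for t
  proof -
    have "exp t < T" using that \<open>T > 0\<close> by (metis exp_less_cancel_iff exp_ln)
    hence "u (exp t) = c * exp t powr a * (1 + w (exp t))" using ueq by simp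
    thus ?thesis unfolding V_def by (simp add: exp_powr_real exp_add[symmetric] algebra_simps)
  qed
  have "\<forall>\<^sub>F x in at_right 0. w x / x powr \<mu> < 0"
    using order_tendstoD(2)[OF wl \<open>\<alpha> < 0\<close>] .
  then obtain b where b: "b > 0" "\<And>y. y > 0 \<Longrightarrow> y < b \<Longrightarrow> w y / y powr \<mu> < 0"
    unfolding eventually_at_right_field by auto
  define t1 where "t1 = ln (min b T)"
  have bnd: "V t < c" if "t < t1" for t
  proof -
    have "exp t < min b T" using that b(1) \<open>T > 0\<close> unfolding t1_def
      by (metis exp_less_cancel_iff exp_ln min_less_iff_conj)
    hence "w (exp t) / exp t powr \<mu> < 0" "exp t < T" using b by auto
    hence "w (exp t) < 0" by (simp add: divide_less_0_iff)
    moreover have "t < ln T" using \<open>exp t < T\<close> \<open>T>0\<close> by (metis exp_less_cancel_iff exp_ln)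
    ultimately show ?thesis using Vw c0 by (simp add: mult_less_0_iff)
  qed
  have pw: "((\<lambda>x. x powr \<mu>) \<longlongrightarrow> 0) (at_right (0::real))"
    by (rule tendsto_zero_powrI[of "\<lambda>x. x" _ "\<lambda>x. \<mu>" \<mu>])
      (use \<open>\<mu>>0\<close> in \<open>auto intro!: tendsto_ident_at simp: eventually_at_right_field\<close>)
  have ev: "\<forall>\<^sub>F x in at_right 0. w x / x powr \<mu> * x powr \<mu> = w x"
    unfolding eventually_at_right_field by (rule exI[of _ 1]) auto
  have wlim0: "((\<lambda>x. w x / x powr \<mu> * x powr \<mu>) \<longlongrightarrow> \<alpha> * 0) (at_right 0)"
    by (rule tendsto_mult[OF wl pw])
  have wlim: "(w \<longlongrightarrow> 0) (at_right 0)"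
    using wlim0 unfolding tendsto_cong[OF ev] by (simp only: mult_zero_right)
  have expF: "filterlim (exp :: real \<Rightarrow> real) (at_right 0) at_bot"
    using tendsto_imp_filterlim_at_right[OF exp_at_bot] by simp
  have wexp: "((\<lambda>t. w (exp t)) \<longlongrightarrow> 0) at_bot"
    using filterlim_compose[OF wlim expF] .
  have ev2: "\<forall>\<^sub>F t in at_bot. c * (1 + w (exp t)) = V t"
    unfolding eventually_at_bot_linorder
    by (rule exI[of _ "ln T - 1"]) (auto intro!: Vw[symmetric])
  have lim0: "((\<lambda>t. c * (1 + w (exp t))) \<longlongrightarrow> c * (1 + 0)) at_bot"
    by (intro tendsto_mult tendsto_add tendsto_const wexp)
  have lim: "(V \<longlongrightarrow> c) at_bot"
    using lim0 unfolding tendsto_cong[OF ev2] by simp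
  show False
  proof (rule core_all[of V V' "2 * a - 1" p k c])
    fix t
    show "V t < c" using stays_below[OF dV dG Vpos bnd lim c0 p1(2) kc] .
  qed (use dV dG Vpos c0 p1 kc in auto)
qed

theorem theorem5p11:
  fixes \<sigma> p a c\<^sub>a :: real
  assumes h\<sigma>: "\<sigma> > -2" and hp: "p < -1 - \<sigma>"
    and ha: "a = (\<sigma> + 2) / (1 - p)"
    and hc: "c\<^sub>a = (a * (1 - a)) powr (1 / (p - 1))"
  shows "\<not> (\<exists>u. pos_solution_on \<sigma> p {0<..} u \<and> (\<forall>x>0. u x < c\<^sub>a * x powr a))
    \<and> (\<forall>\<alpha> \<mu> T w w' w''. \<alpha> < 0 \<longrightarrow> \<mu> > 0 \<longrightarrow>
          \<mu>\<^sup>2 + (2 * a - 1) * \<mu> + a * (1 - a) * (p - 1) = 0 \<longrightarrow> T > 0 \<longrightarrow>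
          continuous_on {0..T} w \<longrightarrow> is_C2_on {0<..<T} w w' w'' \<longrightarrow>
          (\<forall>x\<in>{0<..<T}. x * (x * w'' x + w' x) + (2 * a - 1) * x * w' x
               + a * (1 - a) * (p - 1) * w x
               + a * (1 - a) * ((1 + w x) powr p - 1 - p * w x) = 0) \<longrightarrow>
          ((\<lambda>x. w x / x powr \<mu>) \<longlongrightarrow> \<alpha>) (at_right 0) \<longrightarrow>
          \<not> (\<exists>u. pos_solution_on \<sigma> p {0<..} u \<and>
                 (\<forall>x\<in>{0<..<T}. u x = c\<^sub>a * x powr a * (1 + w x))))"
proof (intro conjI allI impI notI)
  assume "\<exists>u. pos_solution_on \<sigma> p {0<..} u \<and> (\<forall>x>0. u x < c\<^sub>a * x powr a)"
  then obtain u where "pos_solution_on \<sigma> p {0<..} u" "\<forall>x>0. u x < c\<^sub>a * x powr a" by blast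
  then show False using part1[OF h\<sigma> hp ha hc] by blast
next
  fix \<alpha> \<mu> T w w' w''
  assume as: "\<alpha> < 0" "\<mu> > 0" "T > 0"
    "((\<lambda>x. w x / x powr \<mu>) \<longlongrightarrow> \<alpha>) (at_right 0)"
    and ex: "\<exists>u. pos_solution_on \<sigma> p {0<..} u \<and>
                 (\<forall>x\<in>{0<..<T}. u x = c\<^sub>a * x powr a * (1 + w x))"
  then obtain u where "pos_solution_on \<sigma> p {0<..} u"
    "\<forall>x\<in>{0<..<T}. u x = c\<^sub>a * x powr a * (1 + w x)" by blast
  then show False using part2[OF h\<sigma> hp ha hc as] by blast
qed

end
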